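(* Let $\mathfrak g$ be of type $A_n$ and $i\in I$. For $b,b'\in\mathcal B(\infty)$, we have $\widetilde f_i^\ast(b)=b'$ if and only if $\widetilde e_i^\ast(b')=b$.
   Context: $I=\{1,\dots,n\}$. $\mathcal I=\{(s,t)\in\mathbb Z_{>0}\times I:s+t\le n+1\}$; $\mathcal B(\infty)$ is the set of $b=(b_{s,t})_{(s,t)\in\mathcal I}\in\mathbb Z_{\ge0}^{\mathcal I}$ with $b_{1,k}\ge b_{2,k-1}\ge\dots\ge b_{k,1}$ for $1\le k\le n$. Convention: $b_{s,t}=0$, $\mathbf e_{s,t}=0$ for $(s,t)\notin\mathcal I$. $\partial^\ast_{s,t}(b)=b_{s-1,t}-b_{s-1,t+1}-b_{s,t-1}+b_{s,t}$. For $1\le k\le i$: $\Sigma^\ast_k(b)=\sum_{t=1}^k\partial^\ast_{t,i+1-t}(b)$; $\varepsilon_i^\ast(b)=\max_k\Sigma_k^\ast(b)$; $m_i^\ast(b)$, $M_i^\ast(b)$ the smallest and largest maximizing $k$. $\widetilde f_i^\ast(b)=b+\sum_{t=1}^{m_i^\ast(b)}(\mathbf e_{t,i+1-t}-\mathbf e_{t-1,i+1-t})$; $\widetilde e_i^\ast(b)=b-\sum_{t=1}^{M_i^\ast(b)}(\mathbf e_{t,i+1-t}-\mathbf e_{t-1,i+1-t})$ if $\varepsilon_i^\ast(b)>0$, else $\widetilde e_i^\ast(b)=\mathbf 0$ (formal symbol). *)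

theory Defs
  imports Main
begin

text \<open>Type A_n, I = {1..n}. Elements b = (b_{s,t}) are represented as functions
  nat \<Rightarrow> nat \<Rightarrow> int, with the convention b_{s,t} = 0 outside the index set.\<close>

definition idx :: "nat \<Rightarrow> (nat \<times> nat) set" where
  "idx n = {(s, t). 0 < s \<and> 1 \<le> t \<and> t \<le> n \<and> s + t \<le> n + 1}"

definition Binf :: "nat \<Rightarrow> (nat \<Rightarrow> nat \<Rightarrow> int) set" where
  "Binf n = {b. (\<forall>s t. (s, t) \<notin> idx n \<longrightarrow> b s t = 0)
              \<and> (\<forall>s t. (s, t) \<in> idx n \<longrightarrow> 0 \<le> b s t)
              \<and> (\<forall>k. 1 \<le> k \<and> k \<le> n \<longrightarrow> (\<forall>j. 1 \<le> j \<and> j < k \<longrightarrow> b (j + 1) (k - j) \<le> b j (k + 1 - j)))}"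

definition unitv :: "nat \<Rightarrow> nat \<Rightarrow> nat \<Rightarrow> nat \<Rightarrow> nat \<Rightarrow> int" where
  "unitv n s t = (\<lambda>x y. if (s, t) \<in> idx n \<and> x = s \<and> y = t then 1 else 0)"

text \<open>Entry with the convention b_{s,t} = 0 outside the index set (indices are integers here
  so that s-1 = 0 is handled correctly).\<close>
definition ent :: "nat \<Rightarrow> (nat \<Rightarrow> nat \<Rightarrow> int) \<Rightarrow> int \<Rightarrow> int \<Rightarrow> int" where
  "ent n b s t = (if s \<ge> 1 \<and> t \<ge> 1 \<and> (nat s, nat t) \<in> idx n then b (nat s) (nat t) else 0)"

definition dstar :: "nat \<Rightarrow> (nat \<Rightarrow> nat \<Rightarrow> int) \<Rightarrow> int \<Rightarrow> int \<Rightarrow> int" where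
  "dstar n b s t = ent n b (s - 1) t - ent n b (s - 1) (t + 1) - ent n b s (t - 1) + ent n b s t"

definition Sigstar :: "nat \<Rightarrow> nat \<Rightarrow> (nat \<Rightarrow> nat \<Rightarrow> int) \<Rightarrow> nat \<Rightarrow> int" where
  "Sigstar n i b k = (\<Sum>t = 1..k. dstar n b (int t) (int i + 1 - int t))"

definition epsstar :: "nat \<Rightarrow> nat \<Rightarrow> (nat \<Rightarrow> nat \<Rightarrow> int) \<Rightarrow> int" where
  "epsstar n i b = Max (Sigstar n i b ` {1..i})"

definition mstar :: "nat \<Rightarrow> nat \<Rightarrow> (nat \<Rightarrow> nat \<Rightarrow> int) \<Rightarrow> nat" where
  "mstar n i b = Min {k \<in> {1..i}. Sigstar n i b k = epsstar n i b}"

definition Mstar :: "nat \<Rightarrow> nat \<Rightarrow> (nat \<Rightarrow> nat \<Rightarrow> int) \<Rightarrow> nat" where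
  "Mstar n i b = Max {k \<in> {1..i}. Sigstar n i b k = epsstar n i b}"

definition shiftv :: "nat \<Rightarrow> nat \<Rightarrow> nat \<Rightarrow> nat \<Rightarrow> nat \<Rightarrow> int" where
  "shiftv n i k = (\<lambda>x y. \<Sum>t = 1..k. unitv n t (i + 1 - t) x y - unitv n (t - 1) (i + 1 - t) x y)"

definition fstar :: "nat \<Rightarrow> nat \<Rightarrow> (nat \<Rightarrow> nat \<Rightarrow> int) \<Rightarrow> (nat \<Rightarrow> nat \<Rightarrow> int)" where
  "fstar n i b = (\<lambda>x y. b x y + shiftv n i (mstar n i b) x y)"

text \<open>None represents the formal symbol 0.\<close>
definition estar :: "nat \<Rightarrow> nat \<Rightarrow> (nat \<Rightarrow> nat \<Rightarrow> int) \<Rightarrow> (nat \<Rightarrow> nat \<Rightarrow> int) option" where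
  "estar n i b = (if epsstar n i b > 0
                  then Some (\<lambda>x y. b x y - shiftv n i (Mstar n i b) x y) else None)"

end

theory Submission
  imports Defs
begin

lemma sig_formula:
  "Sigstar n i b k = ent n b (int k) (int i + 1 - int k) - ent n b (int k) (int i - int k)"
proof (induction k)
  case 0
  then show ?case by (simp add: Sigstar_def ent_def)
next
  case (Suc k)
  have "Sigstar n i b (Suc k) = Sigstar n i b k + dstar n b (int (Suc k)) (int i + 1 - int (Suc k))"
    by (simp add: Sigstar_def)
  also have "\<dots> = ent n b (int (Suc k)) (int i + 1 - int (Suc k)) - ent n b (int (Suc k)) (int i - int (Suc k))"
    using Suc by (simp add: dstar_def algebra_simps)
  finally show ?case .
qed

lemma ent_at: "1 \<le> s \<Longrightarrow> 1 \<le> t \<Longrightarrow> (s, t) \<in> idx n \<Longrightarrow> ent n b (int s) (int t) = b s t"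
  by (simp add: ent_def)

lemma ent_add: "ent n (\<lambda>x y. b x y + v x y) s t = ent n b s t + ent n v s t"
  by (simp add: ent_def)

lemma ent_sub: "ent n (\<lambda>x y. b x y - v x y) s t = ent n b s t - ent n v s t"
  by (simp add: ent_def)

lemma shift_d:
  assumes "1 \<le> k" "k \<le> i" "i \<le> n" "m \<le> i"
  shows "ent n (shiftv n i m) (int k) (int i + 1 - int k) = (if k \<le> m then 1 else 0)"
proof -
  have q: "int i + 1 - int k = int (i + 1 - k)" using assms by simp
  have e: "ent n (shiftv n i m) (int k) (int i + 1 - int k) = shiftv n i m k (i + 1 - k)"
    unfolding q by (rule ent_at) (use assms in \<open>auto simp: idx_def\<close>)
  have "shiftv n i m k (i + 1 - k) = (\<Sum>t = 1..m. if t = k then 1 else 0)"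
    unfolding shiftv_def
    by (rule sum.cong) (use assms in \<open>auto simp: unitv_def idx_def\<close>)
  also have "\<dots> = (if k \<le> m then 1 else 0)"
    using assms by (simp add: sum.delta)
  finally show ?thesis using e by simp
qed

lemma shift_c:
  assumes "1 \<le> k" "k \<le> i" "i \<le> n" "m \<le> i"
  shows "ent n (shiftv n i m) (int k) (int i - int k) = (if k < m then -1 else 0)"
proof (cases "k = i")
  case True
  then show ?thesis using assms by (simp add: ent_def)
next
  case False
  have q: "int i - int k = int (i - k)" using assms by simp
  have e: "ent n (shiftv n i m) (int k) (int i - int k) = shiftv n i m k (i - k)"
    unfolding q by (rule ent_at) (use assms False in \<open>auto simp: idx_def\<close>)
  have "shiftv n i m k (i - k) = (\<Sum>t = 1..m. if t = Suc k then -1 else 0)"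
    unfolding shiftv_def
    by (rule sum.cong) (use assms False in \<open>auto simp: unitv_def idx_def\<close>)
  also have "\<dots> = (if k < m then -1 else 0)"
    using assms by (simp add: sum.delta)
  finally show ?thesis using e by simp
qed

lemma sig_plus:
  assumes "1 \<le> k" "k \<le> i" "i \<le> n" "m \<le> i"
  shows "Sigstar n i (\<lambda>x y. b x y + shiftv n i m x y) k
         = Sigstar n i b k + (if k \<le> m then 1 else 0) + (if k < m then 1 else 0)"
  using shift_d[OF assms] shift_c[OF assms]
  by (simp add: sig_formula ent_add)

lemma sig_minus:
  assumes "1 \<le> k" "k \<le> i" "i \<le> n" "m \<le> i"
  shows "Sigstar n i (\<lambda>x y. b x y - shiftv n i m x y) k
         = Sigstar n i b k - (if k \<le> m then 1 else 0) - (if k < m then 1 else 0)"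
  using shift_d[OF assms] shift_c[OF assms]
  by (simp add: sig_formula ent_sub)

lemma eps_props:
  assumes "1 \<le> i"
  shows "\<exists>k\<in>{1..i}. Sigstar n i b k = epsstar n i b"
    "\<And>k. k \<in> {1..i} \<Longrightarrow> Sigstar n i b k \<le> epsstar n i b"
proof -
  have f: "finite (Sigstar n i b ` {1..i})" "Sigstar n i b ` {1..i} \<noteq> {}" using assms by auto
  show "\<exists>k\<in>{1..i}. Sigstar n i b k = epsstar n i b"
  proof -
    have "Max (Sigstar n i b ` {1..i}) \<in> Sigstar n i b ` {1..i}" using Max_in[OF f] .
    then show ?thesis unfolding epsstar_def by (metis imageE)
  qed
  show "\<And>k. k \<in> {1..i} \<Longrightarrow> Sigstar n i b k \<le> epsstar n i b"
    using f unfolding epsstar_def by auto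
qed

lemma eps_char:
  assumes "k0 \<in> {1..i}" "Sigstar n i b k0 = v" "\<And>k. k \<in> {1..i} \<Longrightarrow> Sigstar n i b k \<le> v"
  shows "epsstar n i b = v"
  unfolding epsstar_def
  by (rule Max_eqI) (use assms in auto)

lemma m_props:
  assumes "1 \<le> i"
  shows "mstar n i b \<in> {1..i}" "Sigstar n i b (mstar n i b) = epsstar n i b"
    "\<And>k. k \<in> {1..i} \<Longrightarrow> k < mstar n i b \<Longrightarrow> Sigstar n i b k \<noteq> epsstar n i b"
proof -
  let ?A = "{k \<in> {1..i}. Sigstar n i b k = epsstar n i b}"
  have f: "finite ?A" "?A \<noteq> {}" using eps_props(1)[OF assms, where n=n and b=b] by auto
  show "mstar n i b \<in> {1..i}" "Sigstar n i b (mstar n i b) = epsstar n i b"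
    using Min_in[OF f] unfolding mstar_def by auto
  show "Sigstar n i b k \<noteq> epsstar n i b" if k: "k \<in> {1..i}" "k < mstar n i b" for k
  proof
    assume "Sigstar n i b k = epsstar n i b"
    then have "k \<in> ?A" using k by simp
    then have "mstar n i b \<le> k" unfolding mstar_def using Min_le[OF f(1)] by blast
    with k show False by simp
  qed
qed

lemma M_char:
  assumes "k0 \<in> {1..i}" "Sigstar n i b k0 = epsstar n i b"
    "\<And>k. k \<in> {1..i} \<Longrightarrow> k0 < k \<Longrightarrow> Sigstar n i b k \<noteq> epsstar n i b"
  shows "Mstar n i b = k0"
  unfolding Mstar_def
proof (rule Max_eqI)
  show "finite {k \<in> {1..i}. Sigstar n i b k = epsstar n i b}" by simp
  show "k0 \<in> {k \<in> {1..i}. Sigstar n i b k = epsstar n i b}" using assms(1,2) by simp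
  fix y assume "y \<in> {k \<in> {1..i}. Sigstar n i b k = epsstar n i b}"
  then show "y \<le> k0" using assms(3)[of y] by (cases "k0 < y") auto
qed

lemma m_char:
  assumes "k0 \<in> {1..i}" "Sigstar n i b k0 = epsstar n i b"
    "\<And>k. k \<in> {1..i} \<Longrightarrow> k < k0 \<Longrightarrow> Sigstar n i b k \<noteq> epsstar n i b"
  shows "mstar n i b = k0"
  unfolding mstar_def
proof (rule Min_eqI)
  show "finite {k \<in> {1..i}. Sigstar n i b k = epsstar n i b}" by simp
  show "k0 \<in> {k \<in> {1..i}. Sigstar n i b k = epsstar n i b}" using assms(1,2) by simp
  fix y assume "y \<in> {k \<in> {1..i}. Sigstar n i b k = epsstar n i b}"
  then show "k0 \<le> y" using assms(3)[of y] by (cases "y < k0") auto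
qed

lemma M_props:
  assumes "1 \<le> i"
  shows "Mstar n i b \<in> {1..i}" "Sigstar n i b (Mstar n i b) = epsstar n i b"
proof -
  let ?A = "{k \<in> {1..i}. Sigstar n i b k = epsstar n i b}"
  have f: "finite ?A" "?A \<noteq> {}" using eps_props(1)[OF assms, where n=n and b=b] by auto
  show "Mstar n i b \<in> {1..i}" "Sigstar n i b (Mstar n i b) = epsstar n i b"
    using Max_in[OF f] unfolding Mstar_def by auto
qed

theorem proposition6p6:
  fixes n i :: nat and b b' :: "nat \<Rightarrow> nat \<Rightarrow> int"
  assumes "i \<in> {1..n}" and "b \<in> Binf n" and "b' \<in> Binf n"
  shows "fstar n i b = b' \<longleftrightarrow> estar n i b' = Some b"
proof
  have i1: "1 \<le> i" and iN: "i \<le> n" using assms(1) by auto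
  assume fb: "fstar n i b = b'"
  define m where "m = mstar n i b"
  define e where "e = epsstar n i b"
  have mI: "m \<in> {1..i}" and Sm: "Sigstar n i b m = e"
    and Sl: "\<And>k. k \<in> {1..i} \<Longrightarrow> k < m \<Longrightarrow> Sigstar n i b k \<noteq> e"
    using m_props[OF i1, where n=n and b=b] unfolding m_def e_def by auto
  have Sle: "\<And>k. k \<in> {1..i} \<Longrightarrow> Sigstar n i b k \<le> e"
    using eps_props(2)[OF i1] unfolding e_def by auto
  have b': "b' = (\<lambda>x y. b x y + shiftv n i m x y)" using fb unfolding fstar_def m_def by auto
  have S': "\<And>k. k \<in> {1..i} \<Longrightarrow> Sigstar n i b' k
        = Sigstar n i b k + (if k \<le> m then 1 else 0) + (if k < m then 1 else 0)"
    unfolding b' by (rule sig_plus) (use iN mI in auto)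
  have "Sigstar n i b i = b i 1"
    using i1 iN by (simp add: sig_formula ent_def idx_def)
  moreover have "b i 1 \<ge> 0" using assms(2) i1 iN by (simp add: Binf_def idx_def)
  ultimately have e0: "e \<ge> 0" using Sle[of i] i1 by auto
  have eps': "epsstar n i b' = e + 1"
  proof (rule eps_char[OF mI])
    show "Sigstar n i b' m = e + 1" using S'[OF mI] Sm by simp
    fix k assume k: "k \<in> {1..i}"
    show "Sigstar n i b' k \<le> e + 1"
    proof (cases "k < m")
      case True
      from Sle[OF k] Sl[OF k True] have "Sigstar n i b k < e" by simp
      then show ?thesis using S'[OF k] True by simp
    next
      case False
      then show ?thesis using S'[OF k] Sle[OF k] by auto
    qed
  qed
  have M': "Mstar n i b' = m"
  proof (rule M_char[OF mI])
    show "Sigstar n i b' m = epsstar n i b'" using S'[OF mI] Sm eps' by simp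
    fix k assume k: "k \<in> {1..i}" "m < k"
    then show "Sigstar n i b' k \<noteq> epsstar n i b'" using S'[OF k(1)] Sle[OF k(1)] eps' by auto
  qed
  show "estar n i b' = Some b"
    unfolding estar_def eps' M' using e0 by (simp add: b')
next
  have i1: "1 \<le> i" and iN: "i \<le> n" using assms(1) by auto
  assume eb: "estar n i b' = Some b"
  define M where "M = Mstar n i b'"
  define e where "e = epsstar n i b'"
  have epos: "e > 0" and b: "b = (\<lambda>x y. b' x y - shiftv n i M x y)"
    using eb unfolding estar_def M_def e_def by (auto split: if_splits)
  have MI: "M \<in> {1..i}" and SM: "Sigstar n i b' M = e"
    using M_props[OF i1, where n=n and b=b'] unfolding M_def e_def by auto
  have Sg: "\<And>k. k \<in> {1..i} \<Longrightarrow> M < k \<Longrightarrow> Sigstar n i b' k \<noteq> e"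
  proof -
    fix k assume k: "k \<in> {1..i}" "M < k"
    let ?A = "{k \<in> {1..i}. Sigstar n i b' k = epsstar n i b'}"
    have fin: "finite ?A" by auto
    show "Sigstar n i b' k \<noteq> e"
    proof
      assume "Sigstar n i b' k = e"
      then have "k \<in> ?A" using k unfolding e_def by auto
      then have "k \<le> M" using Max_ge[OF fin] unfolding M_def Mstar_def by auto
      with k show False by simp
    qed
  qed
  have Sle: "\<And>k. k \<in> {1..i} \<Longrightarrow> Sigstar n i b' k \<le> e"
    using eps_props(2)[OF i1] unfolding e_def by auto
  have S: "\<And>k. k \<in> {1..i} \<Longrightarrow> Sigstar n i b k
        = Sigstar n i b' k - (if k \<le> M then 1 else 0) - (if k < M then 1 else 0)"
    unfolding b by (rule sig_minus) (use iN MI in auto)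
  have eps: "epsstar n i b = e - 1"
  proof (rule eps_char[OF MI])
    show "Sigstar n i b M = e - 1" using S[OF MI] SM by simp
    fix k assume k: "k \<in> {1..i}"
    show "Sigstar n i b k \<le> e - 1"
    proof (cases "M < k")
      case True
      from Sle[OF k] Sg[OF k True] have "Sigstar n i b' k < e" by simp
      then show ?thesis using S[OF k] True by simp
    next
      case False
      then show ?thesis using S[OF k] Sle[OF k] by auto
    qed
  qed
  have m: "mstar n i b = M"
  proof (rule m_char[OF MI])
    show "Sigstar n i b M = epsstar n i b" using S[OF MI] SM eps by simp
    fix k assume k: "k \<in> {1..i}" "k < M"
    then show "Sigstar n i b k \<noteq> epsstar n i b" using S[OF k(1)] Sle[OF k(1)] eps by auto
  qed
  show "fstar n i b = b'"
    unfolding fstar_def m by (simp add: b)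
qed

end
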